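(* Suppose $y$ is the peak blue entry of a $321$-containing avoider $p$. Then (i) $p\,\backslash\,\{y\}$ is again an avoider, (ii) the blue entries of $p$ other than $y$ become the blue entries of $p\,\backslash\,\{y\}$, and (iii) $y$ is in the peak-insertion set of $p\,\backslash\,\{y\}$.
   Context: Permutations are standard permutations written in one-line form. A permutation on $[n]$ is indecomposable if there is no $k$ with $1\le k<n$ such that its first $k$ entries are exactly $\{1,\dots,k\}$ (the empty permutation is not indecomposable). An "avoider" means an indecomposable permutation avoiding both patterns $3241$ and $4321$. A blue (key-2) entry of an avoider is an entry that serves as the "2" in a $321$ pattern or in a $4312$ pattern. For a $321$-containing avoider, let $a$ be the last (rightmost) entry serving as the "1" of a $321$ pattern; the peak blue entry is the larger of $a$ and its immediate predecessor. Deleting an entry $y$ from a permutation $p$ on $[n]$, written $p\,\backslash\,\{y\}$, means erasing $y$ and subtracting $1$ from each entry $>y$. LRMax means left-to-right maximum. To a $321$-containing permutation $p$ on $[n]$ associate the triple $(a,b,c)$: $a$ is the last "1" of a $321$ in $p$, $b$ is the rightmost entry to the left of $a$ that exceeds $a$, and $c$ is the first non-LRMax entry after $a$ ($c=\infty$ if there is none). Its peak-insertion set is $[a+1,b+1]\cup[c+1,n]$, where $[c+1,n]=\emptyset$ if $c=\infty$. For a $321$-avoiding permutation on $[n]$, set $c=1$ and define its peak-insertion set to be $[2,n]$. *)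

theory Defs
  imports Main
begin

text \<open>Permutations of [n] in one-line form are lists of naturals; positions are 0-indexed.\<close>

definition is_perm :: "nat list \<Rightarrow> bool" where
  "is_perm p \<longleftrightarrow> distinct p \<and> set p = {1..length p}"

definition indecomposable :: "nat list \<Rightarrow> bool" where
  "indecomposable p \<longleftrightarrow> p \<noteq> [] \<and>
     (\<forall>k. 1 \<le> k \<and> k < length p \<longrightarrow> set (take k p) \<noteq> {1..k})"

definition occ :: "nat list \<Rightarrow> nat list \<Rightarrow> nat list \<Rightarrow> bool" where
  "occ p pat idx \<longleftrightarrow> length idx = length pat \<and> sorted_wrt (<) idx \<and>
     (\<forall>i\<in>set idx. i < length p) \<and>
     (\<forall>i<length pat. \<forall>j<length pat. (p ! (idx ! i) < p ! (idx ! j)) \<longleftrightarrow> (pat ! i < pat ! j))"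

definition contains :: "nat list \<Rightarrow> nat list \<Rightarrow> bool" where
  "contains p pat \<longleftrightarrow> (\<exists>idx. occ p pat idx)"

definition avoider :: "nat list \<Rightarrow> bool" where
  "avoider p \<longleftrightarrow> is_perm p \<and> indecomposable p \<and>
     \<not> contains p [3,2,4,1] \<and> \<not> contains p [4,3,2,1]"

definition serves :: "nat list \<Rightarrow> nat list \<Rightarrow> nat \<Rightarrow> nat \<Rightarrow> bool" where
  "serves p pat r j \<longleftrightarrow> (\<exists>idx k. occ p pat idx \<and> k < length pat \<and> pat ! k = r \<and> idx ! k = j)"

definition blue :: "nat list \<Rightarrow> nat set" where
  "blue p = {p ! j | j. j < length p \<and> (serves p [3,2,1] 2 j \<or> serves p [4,3,1,2] 2 j)}"

definition last1pos :: "nat list \<Rightarrow> nat" where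
  "last1pos p = Max {j. serves p [3,2,1] 1 j}"

definition peak_blue :: "nat list \<Rightarrow> nat" where
  "peak_blue p = max (p ! last1pos p) (p ! (last1pos p - 1))"

definition del_entry :: "nat list \<Rightarrow> nat \<Rightarrow> nat list" where
  "del_entry p y = map (\<lambda>x. if y < x then x - 1 else x) (removeAll y p)"

definition is_lrmax :: "nat list \<Rightarrow> nat \<Rightarrow> bool" where
  "is_lrmax p i \<longleftrightarrow> (\<forall>k<i. p ! k < p ! i)"

definition peak_ins :: "nat list \<Rightarrow> nat set" where
  "peak_ins q =
    (if contains q [3,2,1] then
       (let j = last1pos q; a = q ! j;
            b = q ! Max {k. k < j \<and> a < q ! k};
            C = {k. j < k \<and> k < length q \<and> \<not> is_lrmax q k}
        in {a+1..b+1} \<union> (if C = {} then {} else {q ! Min C + 1..length q}))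
     else {2..length q})"

end

theory Submission
  imports Defs
begin




lemma allS3: "(\<forall>i<Suc (Suc (Suc 0)). P (i::nat)) \<longleftrightarrow> P 0 \<and> P (Suc 0) \<and> P (Suc (Suc 0))"
  by (simp add: All_less_Suc conj_ac)
lemma allS4: "(\<forall>i<Suc (Suc (Suc (Suc 0))). P (i::nat)) \<longleftrightarrow> P 0 \<and> P (Suc 0) \<and> P (Suc (Suc 0)) \<and> P (Suc (Suc (Suc 0)))"
  by (simp add: All_less_Suc conj_ac)

lemma occ321x: "occ p [3,2,1] [a,b,c] \<longleftrightarrow> a<b \<and> b<c \<and> c<length p \<and> p!b<p!a \<and> p!c<p!b"
  unfolding occ_def by (simp add: allS3) linarith
lemma occ4321x: "occ p [4,3,2,1] [a,b,c,d] \<longleftrightarrow> a<b \<and> b<c \<and> c<d \<and> d<length p \<and> p!b<p!a \<and> p!c<p!b \<and> p!d<p!c"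
  unfolding occ_def by (simp add: allS4) linarith
lemma occ3241x: "occ p [3,2,4,1] [a,b,c,d] \<longleftrightarrow> a<b \<and> b<c \<and> c<d \<and> d<length p \<and> p!b<p!a \<and> p!a<p!c \<and> p!d<p!b"
  unfolding occ_def by (simp add: allS4) linarith
lemma occ4312x: "occ p [4,3,1,2] [a,b,c,d] \<longleftrightarrow> a<b \<and> b<c \<and> c<d \<and> d<length p \<and> p!b<p!a \<and> p!d<p!b \<and> p!c<p!d"
  unfolding occ_def by (simp add: allS4) linarith


lemma occ_len: "occ p pat idx \<Longrightarrow> length idx = length pat" by (simp add: occ_def)
lemma ex_l3: "(\<exists>idx. length idx = Suc (Suc (Suc 0)) \<and> P idx) \<longleftrightarrow> (\<exists>a b c. P [a,b,c])"
proof
  assume "\<exists>idx. length idx = Suc (Suc (Suc 0)) \<and> P idx"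
  then obtain idx where "length idx = Suc (Suc (Suc 0))" "P idx" by blast
  then show "\<exists>a b c. P [a,b,c]" by (auto simp: length_Suc_conv)
next
  assume "\<exists>a b c. P [a,b,c]" then show "\<exists>idx. length idx = Suc (Suc (Suc 0)) \<and> P idx"
    by (metis length_Cons list.size(3))
qed
lemma ex_l4: "(\<exists>idx. length idx = Suc (Suc (Suc (Suc 0))) \<and> P idx) \<longleftrightarrow> (\<exists>a b c d. P [a,b,c,d])"
proof
  assume "\<exists>idx. length idx = Suc (Suc (Suc (Suc 0))) \<and> P idx"
  then obtain idx where "length idx = Suc (Suc (Suc (Suc 0)))" "P idx" by blast
  then show "\<exists>a b c d. P [a,b,c,d]" by (auto simp: length_Suc_conv)
next
  assume "\<exists>a b c d. P [a,b,c,d]" then show "\<exists>idx. length idx = Suc (Suc (Suc (Suc 0))) \<and> P idx"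
    by (metis length_Cons list.size(3))
qed
lemma exS3: "(\<exists>i<Suc (Suc (Suc 0)). P (i::nat)) \<longleftrightarrow> P 0 \<or> P (Suc 0) \<or> P (Suc (Suc 0))"
  by (simp add: Ex_less_Suc disj_ac)
lemma exS4: "(\<exists>i<Suc (Suc (Suc (Suc 0))). P (i::nat)) \<longleftrightarrow> P 0 \<or> P (Suc 0) \<or> P (Suc (Suc 0)) \<or> P (Suc (Suc (Suc 0)))"
  by (simp add: Ex_less_Suc disj_ac)

lemma contains_len: "contains p pat \<longleftrightarrow> (\<exists>idx. length idx = length pat \<and> occ p pat idx)"
  unfolding contains_def using occ_len by blast
lemma serves_len: "serves p pat r j \<longleftrightarrow> (\<exists>idx. length idx = length pat \<and> occ p pat idx \<and> (\<exists>k<length pat. pat!k = r \<and> idx!k = j))"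
  unfolding serves_def using occ_len by blast

lemma L3: "length [a,b,c::nat] = Suc (Suc (Suc 0))" by simp
lemma L4: "length [a,b,c,d::nat] = Suc (Suc (Suc (Suc 0)))" by simp

lemma c321: "contains p [3,2,1] \<longleftrightarrow> (\<exists>i1 i2 i3. i1<i2 \<and> i2<i3 \<and> i3<length p \<and> p!i2 < p!i1 \<and> p!i3 < p!i2)"
  unfolding contains_len L3 ex_l3 occ321x by blast
lemma c3241: "contains p [3,2,4,1] \<longleftrightarrow> (\<exists>i1 i2 i3 i4. i1<i2 \<and> i2<i3 \<and> i3<i4 \<and> i4<length p \<and> p!i2 < p!i1 \<and> p!i1 < p!i3 \<and> p!i4 < p!i2)"
  unfolding contains_len L4 ex_l4 occ3241x by blast
lemma c4321: "contains p [4,3,2,1] \<longleftrightarrow> (\<exists>i1 i2 i3 i4. i1<i2 \<and> i2<i3 \<and> i3<i4 \<and> i4<length p \<and> p!i2 < p!i1 \<and> p!i3 < p!i2 \<and> p!i4 < p!i3)"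
  unfolding contains_len L4 ex_l4 occ4321x by blast

lemma s321_1: "serves p [3,2,1] 1 j \<longleftrightarrow> (\<exists>i1 i2. i1<i2 \<and> i2<j \<and> j<length p \<and> p!i2 < p!i1 \<and> p!j < p!i2)"
  unfolding serves_len L3 ex_l3 occ321x exS3 by auto
lemma s321_2: "serves p [3,2,1] 2 j \<longleftrightarrow> (\<exists>i1 i3. i1<j \<and> j<i3 \<and> i3<length p \<and> p!j < p!i1 \<and> p!i3 < p!j)"
  unfolding serves_len L3 ex_l3 occ321x exS3 by auto
lemma s4312_2: "serves p [4,3,1,2] 2 j \<longleftrightarrow> (\<exists>i1 i2 i3. i1<i2 \<and> i2<i3 \<and> i3<j \<and> j<length p \<and> p!i2 < p!i1 \<and> p!j < p!i2 \<and> p!i3 < p!j)"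
  unfolding serves_len L4 ex_l4 occ4312x exS4 by auto



definition fy :: "nat \<Rightarrow> nat \<Rightarrow> nat" where "fy y x = (if y < x then x - 1 else x)"

lemma fy_less: "u \<noteq> y \<Longrightarrow> v \<noteq> y \<Longrightarrow> fy y u < fy y v \<longleftrightarrow> u < v"
  unfolding fy_def by auto

lemma removeAll_pos: "distinct p \<Longrightarrow> m < length p \<Longrightarrow> removeAll (p!m) p = take m p @ drop (Suc m) p"
proof -
  assume d: "distinct p" and m: "m < length p"
  have e: "p = take m p @ p!m # drop (Suc m) p" using m by (simp add: id_take_nth_drop)
  have "distinct (take m p @ p!m # drop (Suc m) p)" using d e by simp
  then have "p!m \<notin> set (take m p)" "p!m \<notin> set (drop (Suc m) p)" by auto
  then show ?thesis by (subst e) (simp add: removeAll_id)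
qed

locale dl = fixes p :: "nat list" and m :: nat
  assumes dist: "distinct p" and mlt: "m < length p"
begin

definition g :: "nat \<Rightarrow> nat" where "g i = (if i < m then i else Suc i)"
definition h :: "nat \<Rightarrow> nat" where "h r = (if r < m then r else r - 1)"

abbreviation "q \<equiv> del_entry p (p!m)"

lemma q_eq: "q = map (fy (p!m)) (take m p @ drop (Suc m) p)"
  unfolding del_entry_def fy_def using removeAll_pos[OF dist mlt] by simp

lemma qlen: "length q = length p - 1"
  unfolding q_eq using mlt by simp

lemma qnth: "i < length q \<Longrightarrow> q!i = fy (p!m) (p!(g i))"
  unfolding q_eq g_def using mlt by (auto simp: nth_append min_def)

lemma g_lt: "i < length q \<Longrightarrow> g i < length p"
  using qlen g_def by auto
lemma g_ne: "g i \<noteq> m" unfolding g_def by auto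
lemma g_mono: "i < i' \<Longrightarrow> g i < g i'" unfolding g_def by auto
lemma g_mono_iff: "g i < g i' \<longleftrightarrow> i < i'" unfolding g_def by auto
lemma h_lt: "r < length p \<Longrightarrow> r \<noteq> m \<Longrightarrow> h r < length q" using qlen h_def mlt by auto
lemma gh: "r \<noteq> m \<Longrightarrow> g (h r) = r" unfolding g_def h_def by auto
lemma hg: "h (g i) = i" unfolding g_def h_def by auto
lemma pne: "r < length p \<Longrightarrow> r \<noteq> m \<Longrightarrow> p!r \<noteq> p!m"
  using dist mlt nth_eq_iff_index_eq by blast
lemma pinj: "r < length p \<Longrightarrow> r' < length p \<Longrightarrow> p!r = p!r' \<Longrightarrow> r = r'"
  using dist nth_eq_iff_index_eq by blast

lemma qnth_h: "r < length p \<Longrightarrow> r \<noteq> m \<Longrightarrow> q!(h r) = fy (p!m) (p!r)"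
  using qnth[OF h_lt] gh by simp

lemma q_less: "i < length q \<Longrightarrow> i' < length q \<Longrightarrow> q!i < q!i' \<longleftrightarrow> p!(g i) < p!(g i')"
  using qnth fy_less pne g_lt g_ne by simp

lemma occ_lift: assumes "occ q pat idx" shows "occ p pat (map g idx)"
proof -
  from assms have a: "length idx = length pat" "sorted_wrt (<) idx" "\<forall>i\<in>set idx. i < length q"
    "\<forall>i<length pat. \<forall>j<length pat. (q ! (idx ! i) < q ! (idx ! j)) \<longleftrightarrow> (pat ! i < pat ! j)"
    unfolding occ_def by auto
  have "sorted_wrt (<) (map g idx)" using a(2) by (simp add: sorted_wrt_map g_mono_iff)
  moreover have "\<forall>i\<in>set (map g idx). i < length p" using a(3) g_lt by auto
  moreover have "\<forall>i<length pat. \<forall>j<length pat. (p ! (map g idx ! i) < p ! (map g idx ! j)) \<longleftrightarrow> (pat ! i < pat ! j)"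
  proof (intro allI impI)
    fix i j assume ij: "i < length pat" "j < length pat"
    then have "idx!i < length q" "idx!j < length q" using a(1,3) by auto
    then show "(p ! (map g idx ! i) < p ! (map g idx ! j)) \<longleftrightarrow> (pat ! i < pat ! j)"
      using a(4) ij a(1) q_less by auto
  qed
  ultimately show ?thesis using a(1) unfolding occ_def by simp
qed

lemma contains_lift: "contains q pat \<Longrightarrow> contains p pat"
  unfolding contains_def using occ_lift by blast

lemma serves_lift: "serves q pat r s \<Longrightarrow> serves p pat r (g s)"
  unfolding serves_def
proof -
  assume "\<exists>idx k. occ q pat idx \<and> k < length pat \<and> pat ! k = r \<and> idx ! k = s"
  then obtain idx k where "occ q pat idx" "k < length pat" "pat ! k = r" "idx ! k = s" by blast
  then show "\<exists>idx k. occ p pat idx \<and> k < length pat \<and> pat ! k = r \<and> idx ! k = g s"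
    using occ_lift occ_len by (metis nth_map)
qed

end



context dl begin

lemma perm_q: assumes "is_perm p" shows "is_perm q"
proof -
  let ?y = "p!m"
  have dp: "distinct (removeAll ?y p)" using dist by (simp add: distinct_removeAll)
  have inj: "inj_on (fy ?y) (set (removeAll ?y p))"
    unfolding inj_on_def fy_def by auto
  have qf: "q = map (fy ?y) (removeAll ?y p)" unfolding del_entry_def fy_def by (rule refl)
  have d: "distinct q" unfolding qf distinct_map using dp inj by simp
  have sp: "set p = {1..length p}" using assms unfolding is_perm_def by simp
  have ym: "?y \<in> {1..length p}" using sp mlt nth_mem by blast
  have "set q = fy ?y ` (set p - {?y})" unfolding qf by simp
  also have "\<dots> = {1..length p - 1}"
  proof
    show "fy ?y ` (set p - {?y}) \<subseteq> {1..length p - 1}"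
    proof
      fix v assume "v \<in> fy ?y ` (set p - {?y})"
      then obtain u where u: "u \<in> set p" "u \<noteq> ?y" "v = fy ?y u" by blast
      have "u \<in> {1..length p}" using u sp by blast
      then show "v \<in> {1..length p - 1}" using u ym unfolding fy_def by (cases "?y < u") auto
    qed
    show "{1..length p - 1} \<subseteq> fy ?y ` (set p - {?y})"
    proof
      fix x assume x: "x \<in> {1..length p - 1}"
      show "x \<in> fy ?y ` (set p - {?y})"
      proof (cases "x < ?y")
        case True
        have "x \<in> set p - {?y}" using x True sp by (simp; linarith)
        moreover have "x = fy ?y x" using True unfolding fy_def by simp
        ultimately show ?thesis by blast
      next
        case False
        have "Suc x \<in> set p - {?y}" using x False sp by auto
        moreover have "x = fy ?y (Suc x)" using False unfolding fy_def by simp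
        ultimately show ?thesis by blast
      qed
    qed
  qed
  finally show ?thesis using d qlen unfolding is_perm_def by simp
qed

lemma indec_q:
  assumes perm: "is_perm p" and ind: "indecomposable p" and n3: "3 \<le> length p"
    and z: "z < m" "p!m < p!z" and r: "r < length p" "r \<noteq> m" "m \<le> Suc r" "p!r < p!m"
  shows "indecomposable q"
proof -
  let ?y = "p!m" let ?n = "length p"
  have sp: "set p = {1..?n}" using perm unfolding is_perm_def by simp
  have pv: "\<And>i. i < ?n \<Longrightarrow> p!i \<in> {1..?n}" using sp nth_mem by blast
  have ne: "q \<noteq> []" using qlen n3 by auto
  have cardt: "\<And>l. l \<le> ?n \<Longrightarrow> card (set (take l p)) = l"
    using dist by (simp add: distinct_card min_def)
  have indp: "\<And>l. 1 \<le> l \<Longrightarrow> l < ?n \<Longrightarrow> set (take l p) \<noteq> {1..l}" using ind unfolding indecomposable_def by blast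
  have "\<forall>k. 1 \<le> k \<and> k < length q \<longrightarrow> set (take k q) \<noteq> {1..k}"
  proof (intro allI impI notI)
    fix k assume k: "1 \<le> k \<and> k < length q" and S: "set (take k q) = {1..k}"
    have kn: "Suc k < ?n" using k qlen by linarith
    have Sq: "set (take k q) = (!) q ` {0..<k}" using k by (simp add: nth_image)
    have fv: "\<And>r. r < ?n \<Longrightarrow> r \<noteq> m \<Longrightarrow> h r < k \<Longrightarrow> fy ?y (p!r) \<in> {1..k}"
    proof -
      fix r assume "r < ?n" "r \<noteq> m" "h r < k"
      then have "q!(h r) \<in> set (take k q)" unfolding Sq by auto
      then show "fy ?y (p!r) \<in> {1..k}" using qnth_h \<open>r < ?n\<close> \<open>r \<noteq> m\<close> S by simp
    qed
    show False
    proof (cases "m \<le> k")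
      case True
      show False
      proof (cases "?y \<le> k")
        case True
        have sub: "set (take (Suc k) p) \<subseteq> {1..Suc k}"
        proof
          fix v assume "v \<in> set (take (Suc k) p)"
          then obtain i where i: "i < Suc k" "v = p!i" using kn by (auto simp: nth_image[symmetric])
          show "v \<in> {1..Suc k}"
          proof (cases "i = m")
            case True then show ?thesis using i \<open>?y \<le> k\<close> pv mlt by auto
          next
            case False
            then have "h i < k" using i \<open>m \<le> k\<close> unfolding h_def by auto
            then have "fy ?y (p!i) \<in> {1..k}" using fv i kn False by simp
            then show ?thesis using i pv[of i] kn unfolding fy_def by (auto split: if_splits)
          qed
        qed
        have "set (take (Suc k) p) = {1..Suc k}"
          using card_subset_eq[OF _ sub] cardt[of "Suc k"] kn by simp
        then show False using indp[of "Suc k"] kn by simp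
      next
        case False
        have "h z < k" using z \<open>m \<le> k\<close> unfolding h_def by auto
        then have "fy ?y (p!z) \<in> {1..k}" using fv z mlt by simp
        then show False using z False unfolding fy_def by auto
      qed
    next
      case False
      have hk: "\<And>i. i < k \<Longrightarrow> h i = i \<and> i \<noteq> m \<and> i < ?n" using False kn unfolding h_def by auto
      have fvk: "\<And>i. i < k \<Longrightarrow> fy ?y (p!i) \<in> {1..k}" using hk fv by metis
      have tk: "set (take k p) = (!) p ` {0..<k}" using kn by (simp add: nth_image)
      show False
      proof (cases "?y \<le> k")
        case False
        have sub: "set (take k p) \<subseteq> {1..k}"
        proof
          fix v assume "v \<in> set (take k p)"
          then obtain i where i: "i < k" "v = p!i" unfolding tk by auto
          then show "v \<in> {1..k}" using fvk[OF i(1)] False unfolding fy_def by (auto split: if_splits)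
        qed
        have "set (take k p) = {1..k}"
          using card_subset_eq[OF _ sub] cardt[of k] kn by simp
        then show False using indp[of k] kn k by simp
      next
        case True
        have sub: "insert ?y (set (take k p)) \<subseteq> {1..Suc k}"
        proof
          fix v assume "v \<in> insert ?y (set (take k p))"
          then consider "v = ?y" | i where "i < k" "v = p!i" unfolding tk by auto
          then show "v \<in> {1..Suc k}"
          proof cases
            case 1 then show ?thesis using True pv mlt by auto
          next
            case (2 i) then show ?thesis using fvk[OF 2(1)] pv[of i] kn unfolding fy_def by (auto split: if_splits)
          qed
        qed
        have yn: "?y \<notin> set (take k p)"
        proof
          assume "?y \<in> set (take k p)"
          then obtain i where "i < k" "?y = p!i" unfolding tk by auto
          then show False using hk pinj mlt by metis
        qed
        have "card (insert ?y (set (take k p))) = Suc k" using yn cardt[of k] kn by simp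
        then have eq: "insert ?y (set (take k p)) = {1..Suc k}"
          using card_subset_eq[OF _ sub] by simp
        have "p!r \<in> {1..Suc k}" using r True pv[of r] by auto
        then have "p!r \<in> insert ?y (set (take k p))" by (simp only: eq)
        then have "p!r \<in> set (take k p)" using r by auto
        then obtain i where "i < k" "p!r = p!i" unfolding tk by auto
        then have "r = i" using pinj r kn by auto
        then show False using \<open>i < k\<close> r False by auto
      qed
    qed
  qed
  then show ?thesis using ne unfolding indecomposable_def by blast
qed

end



lemma last1_props:
  assumes "contains x [3,2,1]"
  shows "serves x [3,2,1] 1 (last1pos x)" "\<And>t. serves x [3,2,1] 1 t \<Longrightarrow> t \<le> last1pos x"
proof -
  let ?S = "{t. serves x [3,2,1] 1 t}"
  have "?S \<subseteq> {..<length x}" using s321_1[of x] by blast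
  then have fin: "finite ?S" using finite_subset by blast
  obtain i1 i2 i3 where "i1<i2" "i2<i3" "i3<length x" "x!i2 < x!i1" "x!i3 < x!i2"
    using assms unfolding c321 by blast
  then have "i3 \<in> ?S" unfolding s321_1 by blast
  then have ne: "?S \<noteq> {}" by blast
  show "serves x [3,2,1] 1 (last1pos x)" using Max_in[OF fin ne] unfolding last1pos_def by simp
  show "\<And>t. serves x [3,2,1] 1 t \<Longrightarrow> t \<le> last1pos x" using Max_ge[OF fin] unfolding last1pos_def by simp
qed

context dl begin

lemma h_mono: "r \<noteq> m \<Longrightarrow> r' \<noteq> m \<Longrightarrow> h r < h r' \<longleftrightarrow> r < r'"
  using g_mono_iff gh by metis

lemma blue_q:
  assumes rep: "\<And>t. t < length p \<Longrightarrow> t \<noteq> m \<Longrightarrow> serves p [3,2,1] 2 t \<or> serves p [4,3,1,2] 2 t \<Longrightarrow>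
     (\<exists>i1 i3. i1<t \<and> t<i3 \<and> i3<length p \<and> i1\<noteq>m \<and> i3\<noteq>m \<and> p!t<p!i1 \<and> p!i3<p!t) \<or>
     (\<exists>i1 i2 i3. i1<i2 \<and> i2<i3 \<and> i3<t \<and> i1\<noteq>m \<and> i2\<noteq>m \<and> i3\<noteq>m \<and> p!i2<p!i1 \<and> p!t<p!i2 \<and> p!i3<p!t)"
  shows "fy (p!m) ` (blue p - {p!m}) = blue q"
proof
  show "fy (p!m) ` (blue p - {p!m}) \<subseteq> blue q"
  proof
    fix x assume "x \<in> fy (p!m) ` (blue p - {p!m})"
    then obtain t where t: "t < length p" "serves p [3,2,1] 2 t \<or> serves p [4,3,1,2] 2 t" "p!t \<noteq> p!m"
      "x = fy (p!m) (p!t)" unfolding blue_def by blast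
    have tm: "t \<noteq> m" using t by blast
    have ht: "h t < length q" "q!(h t) = x" using h_lt qnth_h t tm by auto
    from rep[OF t(1) tm t(2)] have "serves q [3,2,1] 2 (h t) \<or> serves q [4,3,1,2] 2 (h t)"
    proof
      assume "\<exists>i1 i3. i1<t \<and> t<i3 \<and> i3<length p \<and> i1\<noteq>m \<and> i3\<noteq>m \<and> p!t<p!i1 \<and> p!i3<p!t"
      then obtain i1 i3 where w: "i1<t" "t<i3" "i3<length p" "i1\<noteq>m" "i3\<noteq>m" "p!t<p!i1" "p!i3<p!t" by blast
      have "h i1 < h t" "h t < h i3" "h i3 < length q" using w tm h_mono h_lt by auto
      moreover have "q!(h t) < q!(h i1)" "q!(h i3) < q!(h t)"
        using w tm t(1) qnth_h fy_less pne by (auto)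
      ultimately show ?thesis unfolding s321_2 by blast
    next
      assume "\<exists>i1 i2 i3. i1<i2 \<and> i2<i3 \<and> i3<t \<and> i1\<noteq>m \<and> i2\<noteq>m \<and> i3\<noteq>m \<and> p!i2<p!i1 \<and> p!t<p!i2 \<and> p!i3<p!t"
      then obtain i1 i2 i3 where w: "i1<i2" "i2<i3" "i3<t" "i1\<noteq>m" "i2\<noteq>m" "i3\<noteq>m" "p!i2<p!i1" "p!t<p!i2" "p!i3<p!t" by blast
      have "h i1 < h i2" "h i2 < h i3" "h i3 < h t" "h t < length q" using w tm h_mono ht by auto
      moreover have "q!(h i2) < q!(h i1)" "q!(h t) < q!(h i2)" "q!(h i3) < q!(h t)"
        using w tm t(1) qnth_h fy_less pne by auto
      ultimately show ?thesis unfolding s4312_2 by blast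
    qed
    then show "x \<in> blue q" using ht unfolding blue_def by blast
  qed
next
  show "blue q \<subseteq> fy (p!m) ` (blue p - {p!m})"
  proof
    fix x assume "x \<in> blue q"
    then obtain s where s: "s < length q" "serves q [3,2,1] 2 s \<or> serves q [4,3,1,2] 2 s" "x = q!s"
      unfolding blue_def by blast
    have "serves p [3,2,1] 2 (g s) \<or> serves p [4,3,1,2] 2 (g s)" using s serves_lift by blast
    moreover have "g s < length p" "p!(g s) \<noteq> p!m" "x = fy (p!m) (p!(g s))"
      using s g_lt g_ne pne qnth by auto
    ultimately show "x \<in> fy (p!m) ` (blue p - {p!m})" unfolding blue_def by blast
  qed
qed

end

locale av = fixes p :: "nat list" and j :: nat
  assumes perm: "is_perm p" and ind: "indecomposable p"
  and n3241: "\<not> contains p [3,2,4,1]" and n4321: "\<not> contains p [4,3,2,1]"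
  and jS: "serves p [3,2,1] 1 j" and jmax: "\<And>t. serves p [3,2,1] 1 t \<Longrightarrow> t \<le> j"
begin

lemma dist: "distinct p" using perm is_perm_def by blast
lemma sp: "set p = {1..length p}" using perm is_perm_def by blast
lemma pv: "i < length p \<Longrightarrow> p!i \<in> {1..length p}" using sp nth_mem by blast
lemma pinj: "i < length p \<Longrightarrow> i' < length p \<Longrightarrow> p!i = p!i' \<Longrightarrow> i = i'"
  using dist nth_eq_iff_index_eq by blast
lemma no3241: "a<b \<Longrightarrow> b<c \<Longrightarrow> c<d \<Longrightarrow> d<length p \<Longrightarrow> p!b < p!a \<Longrightarrow> p!a < p!c \<Longrightarrow> p!d < p!b \<Longrightarrow> False"
  using n3241 unfolding c3241 by blast
lemma no4321: "a<b \<Longrightarrow> b<c \<Longrightarrow> c<d \<Longrightarrow> d<length p \<Longrightarrow> p!b < p!a \<Longrightarrow> p!c < p!b \<Longrightarrow> p!d < p!c \<Longrightarrow> False"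
  using n4321 unfolding c4321 by blast
lemma late: "j < t \<Longrightarrow> t < length p \<Longrightarrow> a < b \<Longrightarrow> b < t \<Longrightarrow> p!b < p!a \<Longrightarrow> p!t < p!b \<Longrightarrow> False"
  using jmax[of t] unfolding s321_1 by force

lemma jw: obtains i1 i2 where "i1<i2" "i2<j" "j<length p" "p!i2 < p!i1" "p!j < p!i2"
  using jS unfolding s321_1 by blast

lemma ex_val: "u \<in> {1..length p} \<Longrightarrow> \<exists>r<length p. p!r = u"
  using sp by (metis in_set_conv_nth)

end



context av begin

lemma caseA:
  assumes A: "p!j < p!(j-1)"
  shows "avoider (del_entry p (p!(j-1))) \<and> fy (p!(j-1)) ` (blue p - {p!(j-1)}) = blue (del_entry p (p!(j-1)))
     \<and> p!(j-1) \<in> peak_ins (del_entry p (p!(j-1)))"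
proof -
  obtain i1 i2 where ii: "i1<i2" "i2<j" "j<length p" "p!i2 < p!i1" "p!j < p!i2" by (rule jw)
  let ?n = "length p" let ?e = "p!(j-1)" let ?a = "p!j"
  interpret d: dl p "j-1" using dist ii by unfold_locales auto
  have i1j: "i1 < j-1" using ii by auto
  have w: "?e < p!i1"
  proof (cases "i2 = j-1")
    case True then show ?thesis using ii by simp
  next
    case False
    then have "i2 < j-1" using ii by auto
    show ?thesis
    proof (rule ccontr)
      assume "\<not> ?e < p!i1"
      moreover have "p!i1 \<noteq> ?e"
      proof
        assume "p!i1 = ?e"
        then have "i1 = j-1" using pinj[of i1 "j-1"] ii by linarith
        then show False using i1j by simp
      qed
      ultimately have "p!i1 < ?e" by simp
      then show False using no3241[of i1 i2 "j-1" j] ii \<open>i2 < j-1\<close> by auto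
    qed
  qed
  have n3: "3 \<le> ?n" using ii by auto
  have av: "avoider d.q"
    unfolding avoider_def using d.perm_q[OF perm] d.indec_q[OF perm ind n3 i1j w, of j] A ii
      d.contains_lift n3241 n4321 by auto
  have bl: "fy ?e ` (blue p - {?e}) = blue d.q"
  proof (rule d.blue_q)
    fix t assume t: "t < ?n" "t \<noteq> j-1" "serves p [3,2,1] 2 t \<or> serves p [4,3,1,2] 2 t"
    from t(3) show "(\<exists>k1 k3. k1<t \<and> t<k3 \<and> k3<?n \<and> k1\<noteq>j-1 \<and> k3\<noteq>j-1 \<and> p!t<p!k1 \<and> p!k3<p!t) \<or>
     (\<exists>k1 k2 k3. k1<k2 \<and> k2<k3 \<and> k3<t \<and> k1\<noteq>j-1 \<and> k2\<noteq>j-1 \<and> k3\<noteq>j-1 \<and> p!k2<p!k1 \<and> p!t<p!k2 \<and> p!k3<p!t)"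
    proof
      assume "serves p [3,2,1] 2 t"
      then obtain k1 k3 where k: "k1<t" "t<k3" "k3<?n" "p!t<p!k1" "p!k3<p!t" unfolding s321_2 by blast
      show ?thesis
      proof (cases "k1 = j-1")
        case True
        then show ?thesis using k w i1j by (intro disjI1 exI[of _ i1] exI[of _ k3]) auto
      next
        case False
        show ?thesis
        proof (cases "k3 = j-1")
          case True
          then show ?thesis using k A ii False by (intro disjI1 exI[of _ k1] exI[of _ j]) auto
        next
          case False2: False
          then show ?thesis using k False by blast
        qed
      qed
    next
      assume "serves p [4,3,1,2] 2 t"
      then obtain k1 k2 k3 where k: "k1<k2" "k2<k3" "k3<t" "t<?n" "p!k2<p!k1" "p!t<p!k2" "p!k3<p!t"
        unfolding s4312_2 by blast
      have k1: "k1 \<noteq> j-1"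
      proof
        assume "k1 = j-1"
        then have "j < k3" using k ii by linarith
        moreover have "p!k3 < p!k2" using k by simp
        ultimately show False using late[of k3 k1 k2] k by auto
      qed
      have k2: "k2 \<noteq> j-1"
      proof
        assume e: "k2 = j-1"
        show False
        proof (cases "k3 = j")
          case True
          have "j-1 < t" using True k by linarith
          then show False using late[of t k1 k2] k e True by auto
        next
          case False
          then have "j < k3" using k e by linarith
          then show False using late[of k3 k1 k2] k e by auto
        qed
      qed
      show ?thesis
      proof (cases "k3 = j-1")
        case True
        have "t \<noteq> j" using k True A by auto
        then show ?thesis using k True A ii k1 k2 t
          by (intro disjI2 exI[of _ k1] exI[of _ k2] exI[of _ j]) auto
      next
        case False
        then show ?thesis using k k1 k2 by blast
      qed
    qed
  qed
  have pk: "?e \<in> peak_ins d.q"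
  proof (cases "contains d.q [3,2,1]")
    case False
    have "?e \<in> {2..length d.q}" using pv[of j] pv[of i1] ii w A d.qlen by auto
    then show ?thesis using False unfolding peak_ins_def by simp
  next
    case True
    define J where "J = last1pos d.q"
    have JS: "serves d.q [3,2,1] 1 J" and Jmax: "\<And>t. serves d.q [3,2,1] 1 t \<Longrightarrow> t \<le> J"
      using last1_props[OF True] J_def by auto
    have Jlt: "J < length d.q" using JS unfolding s321_1 by blast
    have Jle: "J \<le> j-1"
    proof (rule ccontr)
      assume "\<not> J \<le> j-1"
      then have "d.g J = Suc J" unfolding d.g_def by auto
      moreover have "d.g J \<le> j" using jmax d.serves_lift[OF JS] by blast
      ultimately show False using \<open>\<not> J \<le> j-1\<close> by auto
    qed
    have hj: "d.h j = j-1" unfolding d.h_def using ii by auto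
    have qj2: "j-1 < length d.q" using d.qlen ii by auto
    have "d.q!(j-1) = fy ?e ?a" using d.qnth_h[of j] hj ii by auto
    then have qj: "d.q!(j-1) = ?a" "j-1 < length d.q" using A qj2 unfolding fy_def by auto
    have hid: "\<And>k. k < j-1 \<Longrightarrow> d.h k = k \<and> d.g k = k" unfolding d.h_def d.g_def by auto
    have qk: "\<And>k. k < j-1 \<Longrightarrow> d.q!k = fy ?e (p!k)"
      using d.qnth_h hid ii by (metis less_imp_le less_le_trans less_imp_diff_less nat_neq_iff)
    show ?thesis
    proof (cases "J = j-1")
      case True
      define K where "K = {k. k < J \<and> d.q!J < d.q!k}"
      have finK: "finite K" unfolding K_def by simp
      have neK: "K \<noteq> {}" using JS unfolding s321_1 K_def by blast
      define Kx where "Kx = Max K"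
      have Kx: "Kx < j-1" "?a < d.q!Kx" using Max_in[OF finK neK] True qj unfolding Kx_def K_def by auto
      have Kmax: "\<And>k. k < j-1 \<Longrightarrow> ?a < d.q!k \<Longrightarrow> k \<le> Kx"
        using Max_ge[OF finK] True qj unfolding Kx_def K_def by auto
      have Kxn: "Kx < ?n" "Kx \<noteq> j-1" using Kx ii by auto
      have "?e \<le> d.q!Kx + 1"
      proof (cases "?e < p!Kx")
        case True then show ?thesis using qk[OF Kx(1)] unfolding fy_def by simp
      next
        case False
        then have v: "p!Kx < ?e" using d.pne Kxn by (metis nat_neq_iff)
        have qv: "d.q!Kx = p!Kx" using qk[OF Kx(1)] v unfolding fy_def by simp
        show ?thesis
        proof (rule ccontr)
          assume "\<not> ?e \<le> d.q!Kx + 1"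
          then have u: "p!Kx < Suc (p!Kx)" "Suc (p!Kx) < ?e" using qv by auto
          have "j-1 < ?n" using ii by linarith
          then have "Suc (p!Kx) \<in> {1..?n}" using u pv[of "j-1"] by auto
          then obtain r where r: "r < ?n" "p!r = Suc (p!Kx)" using ex_val by blast
          have rne: "r \<noteq> Kx" "r \<noteq> j-1" "r \<noteq> j" using r u Kx qv by auto
          consider "r < Kx" | "Kx < r \<and> r < j-1" | "j < r" using rne Kx by linarith
          then show False
          proof cases
            case 1 then show False using no3241[of r Kx "j-1" j] r u Kx qv ii by auto
          next
            case 2
            then have "?a < d.q!r" using qk[of r] r u Kx qv unfolding fy_def by auto
            then show False using Kmax[of r] 2 by auto
          next
            case 3
            then have "j-1 < r" by linarith
            then show False using late[of r i1 "j-1"] 3 r u w i1j by auto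
          qed
        qed
      qed
      moreover have "Suc ?a \<le> ?e" using A by simp
      ultimately have "?e \<in> {d.q ! J + 1..d.q ! Max {k. k < J \<and> d.q ! J < d.q ! k} + 1}"
        using True qj unfolding Kx_def K_def by simp
      then show ?thesis using \<open>contains d.q [3,2,1]\<close> unfolding peak_ins_def Let_def J_def by auto
    next
      case False
      then have Jl: "J < j-1" using Jle by simp
      define C where "C = {k. J < k \<and> k < length d.q \<and> \<not> is_lrmax d.q k}"
      have jC: "j-1 \<in> C"
      proof -
        have "\<not> d.q!i1 < d.q!(j-1)" using qk[OF i1j] w qj A unfolding fy_def by auto
        then show ?thesis using Jl qj i1j unfolding C_def is_lrmax_def by auto
      qed
      have finC: "finite C" unfolding C_def by simp
      have neC: "C \<noteq> {}" using jC by blast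
      define K0 where "K0 = Min C"
      have K0: "K0 \<in> C" "K0 \<le> j-1" using Min_in[OF finC neC] Min_le[OF finC jC] unfolding K0_def by auto
      have "d.q!K0 + 1 \<le> ?e"
      proof (cases "K0 = j-1")
        case True then show ?thesis using qj A by simp
      next
        case False
        then have K0l: "K0 < j-1" using K0 by simp
        obtain z where z: "z < K0" "\<not> d.q!z < d.q!K0" using K0 unfolding C_def is_lrmax_def by auto
        have zl: "z < j-1" using z K0l by simp
        have "d.q!z \<noteq> d.q!K0" using d.perm_q[OF perm] z K0l qj unfolding is_perm_def
          by (metis less_trans nth_eq_iff_index_eq nat_neq_iff)
        then have "d.q!K0 < d.q!z" using z by simp
        then have pz: "p!K0 < p!z" using d.q_less[of K0 z] hid[OF K0l] hid[OF zl] K0l zl qj by auto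
        show ?thesis
        proof (rule ccontr)
          assume "\<not> d.q!K0 + 1 \<le> ?e"
          then have "?e \<le> fy ?e (p!K0)" using qk[OF K0l] by simp
          moreover have "p!K0 \<noteq> ?e" using d.pne[of K0] K0l ii by auto
          ultimately have "?e < p!K0" unfolding fy_def by (auto split: if_splits)
          then show False using no4321[of z K0 "j-1" j] z pz K0l A ii by auto
        qed
      qed
      moreover have "?e \<le> length d.q" using pv[of i1] w ii d.qlen by auto
      ultimately have "?e \<in> {d.q ! Min C + 1..length d.q}" unfolding K0_def by simp
      then show ?thesis using \<open>contains d.q [3,2,1]\<close> neC unfolding peak_ins_def Let_def J_def C_def by auto
    qed
  qed
  show ?thesis using av bl pk by blast
qed

end



context av begin

lemma caseB:
  assumes B: "p!(j-1) < p!j"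
  shows "avoider (del_entry p (p!j)) \<and> fy (p!j) ` (blue p - {p!j}) = blue (del_entry p (p!j))
     \<and> p!j \<in> peak_ins (del_entry p (p!j))"
proof -
  obtain i1 i2 where ii: "i1<i2" "i2<j" "j<length p" "p!i2 < p!i1" "p!j < p!i2" by (rule jw)
  let ?n = "length p" let ?e = "p!(j-1)" let ?a = "p!j"
  interpret d: dl p j using dist ii by unfold_locales auto
  have j1: "j-1 < ?n" "j-1 \<noteq> j" "j \<le> Suc (j-1)" using ii by auto
  have i1a: "?a < p!i1" using ii by simp
  have i1j: "i1 < j" using ii by simp
  have n3: "3 \<le> ?n" using ii by auto
  have av: "avoider d.q"
    unfolding avoider_def using d.perm_q[OF perm] d.indec_q[OF perm ind n3 i1j i1a j1 B]
      d.contains_lift n3241 n4321 by auto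
  have bl: "fy ?a ` (blue p - {?a}) = blue d.q"
  proof (rule d.blue_q)
    fix t assume t: "t < ?n" "t \<noteq> j" "serves p [3,2,1] 2 t \<or> serves p [4,3,1,2] 2 t"
    from t(3) show "(\<exists>k1 k3. k1<t \<and> t<k3 \<and> k3<?n \<and> k1\<noteq>j \<and> k3\<noteq>j \<and> p!t<p!k1 \<and> p!k3<p!t) \<or>
     (\<exists>k1 k2 k3. k1<k2 \<and> k2<k3 \<and> k3<t \<and> k1\<noteq>j \<and> k2\<noteq>j \<and> k3\<noteq>j \<and> p!k2<p!k1 \<and> p!t<p!k2 \<and> p!k3<p!t)"
    proof
      assume "serves p [3,2,1] 2 t"
      then obtain k1 k3 where k: "k1<t" "t<k3" "k3<?n" "p!t<p!k1" "p!k3<p!t" unfolding s321_2 by blast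
      show ?thesis
      proof (cases "k1 = j")
        case True
        then have "i1 < t" "p!t < p!i1" using k ii by auto
        then show ?thesis using k True ii by (intro disjI1 exI[of _ i1] exI[of _ k3]) auto
      next
        case False
        show ?thesis
        proof (cases "k3 = j")
          case True
          have "t \<noteq> j-1" using True k B by auto
          then have "t < j-1" using True k by linarith
          then show ?thesis using k B ii False True j1 by (intro disjI1 exI[of _ k1] exI[of _ "j-1"]) auto
        next
          case False2: False
          then show ?thesis using k False by blast
        qed
      qed
    next
      assume "serves p [4,3,1,2] 2 t"
      then obtain k1 k2 k3 where k: "k1<k2" "k2<k3" "k3<t" "t<?n" "p!k2<p!k1" "p!t<p!k2" "p!k3<p!t"
        unfolding s4312_2 by blast
      show ?thesis
      proof (cases "k3 = j")
        case True
        have "k2 \<noteq> j-1" using k True B by auto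
        then have "k2 < j-1" using k True by linarith
        then show ?thesis using k True B j1
          by (intro disjI2 exI[of _ k1] exI[of _ k2] exI[of _ "j-1"]) auto
      next
        case F3: False
        show ?thesis
        proof (cases "k2 = j")
          case True
          then show ?thesis using k ii F3
            by (intro disjI2 exI[of _ i1] exI[of _ i2] exI[of _ k3]) auto
        next
          case F2: False
          show ?thesis
          proof (cases "k1 = j")
            case True
            then show ?thesis using k ii F3 F2
              by (intro disjI2 exI[of _ i1] exI[of _ k2] exI[of _ k3]) auto
          next
            case False then show ?thesis using k F2 F3 by blast
          qed
        qed
      qed
    qed
  qed
  have hid: "\<And>k. k < j \<Longrightarrow> d.h k = k \<and> d.g k = k" unfolding d.h_def d.g_def by auto
  have qk: "\<And>k. k < j \<Longrightarrow> d.q!k = fy ?a (p!k)"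
  proof -
    fix k assume kk: "k < j"
    then have "k < ?n" "k \<noteq> j" using ii by auto
    then show "d.q!k = fy ?a (p!k)" using d.qnth_h[of k] hid[OF kk] by simp
  qed
  have qlt: "\<And>k k'. k < j \<Longrightarrow> k' < j \<Longrightarrow> d.q!k < d.q!k' \<longleftrightarrow> p!k < p!k'"
  proof -
    fix k k' assume kk: "k < j" "k' < j"
    then have "k < length d.q" "k' < length d.q" using d.qlen ii by auto
    then show "d.q!k < d.q!k' \<longleftrightarrow> p!k < p!k'" using d.q_less hid kk by metis
  qed
  have qe: "d.q!(j-1) = ?e" using qk[of "j-1"] B ii unfolding fy_def by auto
  have jq: "j-1 < length d.q" using d.qlen ii by auto
  have i2j: "i2 < j-1"
  proof -
    have "i2 \<noteq> j-1" using ii B by auto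
    then show ?thesis using ii by linarith
  qed
  have S1: "serves d.q [3,2,1] 1 (j-1)"
    unfolding s321_1 using ii i2j jq qlt[of i2 i1] qlt[of "j-1" i2] B
    by (intro exI[of _ i1] exI[of _ i2]) auto
  then have C3: "contains d.q [3,2,1]" unfolding s321_1 c321 by blast
  define J where "J = last1pos d.q"
  have JS: "serves d.q [3,2,1] 1 J" and Jmax: "\<And>t. serves d.q [3,2,1] 1 t \<Longrightarrow> t \<le> J"
    using last1_props[OF C3] J_def by auto
  have Jle: "J \<le> j-1"
  proof (rule ccontr)
    assume "\<not> J \<le> j-1"
    then have "d.g J = Suc J" unfolding d.g_def by auto
    moreover have "d.g J \<le> j" using jmax d.serves_lift[OF JS] by blast
    ultimately show False using \<open>\<not> J \<le> j-1\<close> by auto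
  qed
  have JJ: "J = j-1" using Jle Jmax[OF S1] by simp
  define K where "K = {k. k < J \<and> d.q!J < d.q!k}"
  have finK: "finite K" unfolding K_def by simp
  have i2K: "i2 \<in> K" unfolding K_def JJ using i2j qe qk[of i2] ii B unfolding fy_def by auto
  then have neK: "K \<noteq> {}" by blast
  define Kx where "Kx = Max K"
  have Kx: "Kx < j-1" "?e < d.q!Kx" using Max_in[OF finK neK] JJ qe unfolding Kx_def K_def by auto
  have Kge: "i2 \<le> Kx" using Max_ge[OF finK i2K] unfolding Kx_def .
  have Kxn: "Kx < ?n" "Kx \<noteq> j" "Kx < j" using Kx ii by auto
  have "?a \<le> d.q!Kx + 1"
  proof (cases "?a < p!Kx")
    case True then show ?thesis using qk[OF Kxn(3)] unfolding fy_def by simp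
  next
    case False
    then have v: "p!Kx < ?a" using d.pne Kxn by (metis nat_neq_iff)
    have qv: "d.q!Kx = p!Kx" using qk[OF Kxn(3)] v unfolding fy_def by simp
    have "Kx \<noteq> i2" using v ii by auto
    then have "i2 < Kx" using Kge by simp
    then show ?thesis using no4321[of i1 i2 Kx "j-1"] ii v qv Kx j1 by auto
  qed
  moreover have "Suc ?e \<le> ?a" using B by simp
  ultimately have "?a \<in> {d.q ! J + 1..d.q ! Max {k. k < J \<and> d.q ! J < d.q ! k} + 1}"
    using JJ qe unfolding Kx_def K_def by simp
  then have pk: "?a \<in> peak_ins d.q" using C3 unfolding peak_ins_def Let_def J_def by auto
  show ?thesis using av bl pk by blast
qed

end



theorem proposition6:
  fixes p :: "nat list" and y :: nat
  assumes "avoider p" and "contains p [3,2,1]" and "y = peak_blue p"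
  shows "avoider (del_entry p y)
     \<and> (\<lambda>x. if y < x then x - 1 else x) ` (blue p - {y}) = blue (del_entry p y)
     \<and> y \<in> peak_ins (del_entry p y)"
proof -
  have perm: "is_perm p" and ind: "indecomposable p" and n1: "\<not> contains p [3,2,4,1]"
    and n2: "\<not> contains p [4,3,2,1]" using assms(1) unfolding avoider_def by auto
  define j where "j = last1pos p"
  have jS: "serves p [3,2,1] 1 j" and jmax: "\<And>t. serves p [3,2,1] 1 t \<Longrightarrow> t \<le> j"
    using last1_props[OF assms(2)] j_def by auto
  interpret av p j using perm ind n1 n2 jS jmax by unfold_locales auto
  obtain i1 i2 where ii: "i1<i2" "i2<j" "j<length p" "p!i2 < p!i1" "p!j < p!i2" by (rule jw)
  have ne: "p!(j-1) \<noteq> p!j"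
  proof
    assume "p!(j-1) = p!j"
    then have "j-1 = j" using pinj[of "j-1" j] ii by linarith
    then show False using ii by simp
  qed
  have lam: "(\<lambda>x. if y < x then x - 1 else x) = fy y" by (rule ext) (simp add: fy_def)
  have py: "y = max (p!j) (p!(j-1))" using assms(3) unfolding peak_blue_def j_def by simp
  show ?thesis
  proof (cases "p!j < p!(j-1)")
    case True
    then have "y = p!(j-1)" using py by simp
    then show ?thesis unfolding lam using caseA[OF True] by simp
  next
    case False
    then have B: "p!(j-1) < p!j" using ne by simp
    then have "y = p!j" using py by simp
    then show ?thesis unfolding lam using caseB[OF B] by simp
  qed
qed


end
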